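(* Suppose $N$ carries a graded complementation and $X$ is a Macaulay basis of $M$. Then for every $m\in N$ there is exactly one $m'\in N$ such that $m\Rightarrow_X^* m'$ and $m'$ is reduced with respect to $\Rightarrow_X$. Moreover this $m'$ satisfies $m'_b\in N_b\ominus W_b(X)$ for every $b\in B$.
   Context: Standing setup. $\mathbf{k}$ is a field. $(A,+,0)$ is a finitely generated, cancellative commutative monoid with a total order $\le$ which is a well-order, such that $0<a$ for every $a\neq0$ and $a\le a'$ implies $a+c\le a'+c$. $R=\bigoplus_{a\in A}R_a$ is a commutative Noetherian $\mathbf{k}$-algebra graded by $A$. $B$ is a well-ordered totally ordered set with an action $(a,b)\mapsto a\cdot b$ of $A$ such that $0\cdot b=b$, $(a+a')\cdot b=a\cdot(a'\cdot b)$, monotone and cancellative in each argument. $N=\bigoplus_{b\in B}N_b$ is a Noetherian $R$-module graded by $B$ ($R_aN_b\subseteq N_{a\cdot b}$), $M\subseteq N$ an $R$-submodule. For $m=\sum_b m_b\ne0$: $\deg m=\max\{b:m_b\ne0\}$, $\operatorname{lf}(m)=m_{\deg m}$; homogeneous means lying in one graded piece (also for $R$). A finite set $X=\{m_1,\dots,m_n\}$ of nonzero elements of $M$ is a Macaulay basis of $M$ if the $R$-submodule generated by $\{\operatorname{lf}(p):0\ne p\in M\}$ equals that generated by $\operatorname{lf}(m_1),\dots,\operatorname{lf}(m_n)$. $W_b(X)=\operatorname{span}_{\mathbf{k}}\{r\operatorname{lf}(x): x\in X,\ r\in R\text{ homogeneous},\ r\operatorname{lf}(x)\in N_b\}\subseteq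 N_b$. A graded complementation on $N$ assigns to each $b$ and each subspace $W\le N_b$ a subspace $W^c\le N_b$ with $W\oplus W^c=N_b$; $U\ominus W:=U\cap W^c$. Relation: $m\Rightarrow_X m'$ iff $\{b: m_b\notin W_b(X)^c\}$ is nonempty with maximum $b$, and $m'=m-\sum_j r_jx_j$ with $x_j\in X$, $r_j\in R$ homogeneous, $r_j\operatorname{lf}(x_j)\in N_b$, and $m_b-\sum_j r_j\operatorname{lf}(x_j)\in W_b(X)^c$. $\Rightarrow_X^*$ is the reflexive–transitive closure; $m$ is reduced w.r.t. $\Rightarrow_X$ if no $m'$ satisfies $m\Rightarrow_X m'$. *)

theory Defs
  imports Main "HOL.Modules"
begin

inductive_set monoid_gen :: "'a::comm_monoid_add set \<Rightarrow> 'a set" for G where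
  gen_zero: "0 \<in> monoid_gen G"
| gen_add: "g \<in> G \<Longrightarrow> x \<in> monoid_gen G \<Longrightarrow> g + x \<in> monoid_gen G"

definition graded_decomp :: "('i \<Rightarrow> 'v::comm_monoid_add set) \<Rightarrow> bool" where
  "graded_decomp G \<longleftrightarrow>
     (\<forall>v. \<exists>!f. finite {i. f i \<noteq> 0} \<and> (\<forall>i. f i \<in> G i) \<and> v = sum f {i. f i \<noteq> 0})"

definition gcomp :: "('i \<Rightarrow> 'v::comm_monoid_add set) \<Rightarrow> 'v \<Rightarrow> 'i \<Rightarrow> 'v" where
  "gcomp G v = (THE f. finite {i. f i \<noteq> 0} \<and> (\<forall>i. f i \<in> G i) \<and> v = sum f {i. f i \<noteq> 0})"

text \<open>deg m = max {b. m_b \<noteq> 0}, lf m = m_(deg m) (meaningful for m \<noteq> 0).\<close>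
definition gdeg :: "('i::linorder \<Rightarrow> 'v::comm_monoid_add set) \<Rightarrow> 'v \<Rightarrow> 'i" where
  "gdeg G v = Max {i. gcomp G v i \<noteq> 0}"

definition glf :: "('i::linorder \<Rightarrow> 'v::comm_monoid_add set) \<Rightarrow> 'v \<Rightarrow> 'v" where
  "glf G v = gcomp G v (gdeg G v)"

definition kscale :: "('k \<Rightarrow> 'r) \<Rightarrow> ('r \<Rightarrow> 'n \<Rightarrow> 'n) \<Rightarrow> 'k \<Rightarrow> 'n \<Rightarrow> 'n" where
  "kscale alg rmul c n = rmul (alg c) n"

definition homogeneous :: "('a \<Rightarrow> 'r set) \<Rightarrow> 'r \<Rightarrow> bool" where
  "homogeneous gradR r \<longleftrightarrow> (\<exists>a. r \<in> gradR a)"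

text \<open>Standing setup: k field, A finitely generated cancellative commutative
  well-ordered monoid, R = (+)_a R_a a commutative Noetherian A-graded k-algebra
  (k-algebra structure via the ring homomorphism alg), B a well-ordered set with
  an A-action, N = (+)_b N_b a Noetherian B-graded R-module, M \<subseteq> N a submodule.\<close>
definition standing_setup ::
  "('k::field \<Rightarrow> 'r::comm_ring_1) \<Rightarrow> ('a::{cancel_comm_monoid_add, wellorder} \<Rightarrow> 'r set)
     \<Rightarrow> ('a \<Rightarrow> 'b::wellorder \<Rightarrow> 'b) \<Rightarrow> ('r \<Rightarrow> 'n::ab_group_add \<Rightarrow> 'n) \<Rightarrow> ('b \<Rightarrow> 'n set)
     \<Rightarrow> 'n set \<Rightarrow> bool" where
  "standing_setup alg gradR act rmul gradN M \<longleftrightarrow>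
     \<comment> \<open>A: finitely generated, 0 < a for a \<noteq> 0, order compatible with +\<close>
     (\<exists>G :: 'a set. finite G \<and> monoid_gen G = UNIV) \<and>
     (\<forall>a :: 'a. a \<noteq> 0 \<longrightarrow> 0 < a) \<and>
     (\<forall>a a' c :: 'a. a \<le> a' \<longrightarrow> a + c \<le> a' + c) \<and>
     \<comment> \<open>R: commutative k-algebra (structure map alg), A-graded, Noetherian\<close>
     alg 1 = 1 \<and> (\<forall>c d. alg (c + d) = alg c + alg d) \<and> (\<forall>c d. alg (c * d) = alg c * alg d) \<and>
     (\<forall>a. module.subspace (\<lambda>c r. alg c * r) (gradR a)) \<and>
     (\<forall>r s a a'. r \<in> gradR a \<and> s \<in> gradR a' \<longrightarrow> r * s \<in> gradR (a + a')) \<and>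
     graded_decomp gradR \<and>
     (\<forall>I. module.subspace ((*) :: 'r \<Rightarrow> 'r \<Rightarrow> 'r) I \<longrightarrow>
          (\<exists>F. finite F \<and> module.span ((*) :: 'r \<Rightarrow> 'r \<Rightarrow> 'r) F = I)) \<and>
     \<comment> \<open>B: well-ordered set with a monotone cancellative A-action\<close>
     (\<forall>b. act 0 b = b) \<and>
     (\<forall>a a' b. act (a + a') b = act a (act a' b)) \<and>
     (\<forall>a a' b. a \<le> a' \<longrightarrow> act a b \<le> act a' b) \<and>
     (\<forall>a b b'. b \<le> b' \<longrightarrow> act a b \<le> act a b') \<and>
     (\<forall>a a' b. act a b = act a' b \<longrightarrow> a = a') \<and>
     (\<forall>a b b'. act a b = act a b' \<longrightarrow> b = b') \<and>
     \<comment> \<open>N: B-graded Noetherian R-module\<close>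
     module rmul \<and>
     (\<forall>b. module.subspace (kscale alg rmul) (gradN b)) \<and>
     (\<forall>r n a b. r \<in> gradR a \<and> n \<in> gradN b \<longrightarrow> rmul r n \<in> gradN (act a b)) \<and>
     graded_decomp gradN \<and>
     (\<forall>S. module.subspace rmul S \<longrightarrow> (\<exists>F. finite F \<and> module.span rmul F = S)) \<and>
     \<comment> \<open>M: R-submodule of N\<close>
     module.subspace rmul M"

definition macaulay_basis ::
  "('r::comm_ring_1 \<Rightarrow> 'n::ab_group_add \<Rightarrow> 'n) \<Rightarrow> ('b::linorder \<Rightarrow> 'n set) \<Rightarrow> 'n set \<Rightarrow> 'n set \<Rightarrow> bool" where
  "macaulay_basis rmul gradN M X \<longleftrightarrow>
     finite X \<and> X \<subseteq> M \<and> 0 \<notin> X \<and>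
     module.span rmul {glf gradN p | p. p \<in> M \<and> p \<noteq> 0} = module.span rmul (glf gradN ` X)"

definition graded_complementation ::
  "('k::field \<Rightarrow> 'r::comm_ring_1) \<Rightarrow> ('r \<Rightarrow> 'n::ab_group_add \<Rightarrow> 'n) \<Rightarrow> ('b \<Rightarrow> 'n set)
     \<Rightarrow> ('b \<Rightarrow> 'n set \<Rightarrow> 'n set) \<Rightarrow> bool" where
  "graded_complementation alg rmul gradN compl \<longleftrightarrow>
     (\<forall>b W. module.subspace (kscale alg rmul) W \<and> W \<subseteq> gradN b \<longrightarrow>
        module.subspace (kscale alg rmul) (compl b W) \<and> compl b W \<subseteq> gradN b \<and>
        W \<inter> compl b W = {0} \<and> {w + w' | w w'. w \<in> W \<and> w' \<in> compl b W} = gradN b)"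

definition compl_diff :: "('b \<Rightarrow> 'n set \<Rightarrow> 'n set) \<Rightarrow> 'b \<Rightarrow> 'n set \<Rightarrow> 'n set \<Rightarrow> 'n set" where
  "compl_diff compl b U W = U \<inter> compl b W"

definition Wspace ::
  "('k::field \<Rightarrow> 'r::comm_ring_1) \<Rightarrow> ('a \<Rightarrow> 'r set) \<Rightarrow> ('r \<Rightarrow> 'n::ab_group_add \<Rightarrow> 'n)
     \<Rightarrow> ('b::linorder \<Rightarrow> 'n set) \<Rightarrow> 'n set \<Rightarrow> 'b \<Rightarrow> 'n set" where
  "Wspace alg gradR rmul gradN X b =
     module.span (kscale alg rmul)
       {rmul r (glf gradN x) | x r. x \<in> X \<and> homogeneous gradR r \<and> rmul r (glf gradN x) \<in> gradN b}"

definition red_step ::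
  "('k::field \<Rightarrow> 'r::comm_ring_1) \<Rightarrow> ('a \<Rightarrow> 'r set) \<Rightarrow> ('r \<Rightarrow> 'n::ab_group_add \<Rightarrow> 'n)
     \<Rightarrow> ('b::linorder \<Rightarrow> 'n set) \<Rightarrow> ('b \<Rightarrow> 'n set \<Rightarrow> 'n set) \<Rightarrow> 'n set \<Rightarrow> 'n \<Rightarrow> 'n \<Rightarrow> bool" where
  "red_step alg gradR rmul gradN compl X m m' \<longleftrightarrow>
     (\<exists>b. gcomp gradN m b \<notin> compl b (Wspace alg gradR rmul gradN X b) \<and>
          (\<forall>b'. gcomp gradN m b' \<notin> compl b' (Wspace alg gradR rmul gradN X b') \<longrightarrow> b' \<le> b) \<and>
          (\<exists>rs :: ('r \<times> 'n) list.
             (\<forall>(r, x) \<in> set rs. x \<in> X \<and> homogeneous gradR r \<and> rmul r (glf gradN x) \<in> gradN b) \<and>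
             m' = m - (\<Sum>(r, x) \<leftarrow> rs. rmul r x) \<and>
             gcomp gradN m b - (\<Sum>(r, x) \<leftarrow> rs. rmul r (glf gradN x))
               \<in> compl b (Wspace alg gradR rmul gradN X b)))"

definition reduced ::
  "('k::field \<Rightarrow> 'r::comm_ring_1) \<Rightarrow> ('a \<Rightarrow> 'r set) \<Rightarrow> ('r \<Rightarrow> 'n::ab_group_add \<Rightarrow> 'n)
     \<Rightarrow> ('b::linorder \<Rightarrow> 'n set) \<Rightarrow> ('b \<Rightarrow> 'n set \<Rightarrow> 'n set) \<Rightarrow> 'n set \<Rightarrow> 'n \<Rightarrow> bool" where
  "reduced alg gradR rmul gradN compl X m \<longleftrightarrow> \<not> (\<exists>m'. red_step alg gradR rmul gradN compl X m m')"

end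

theory Submission imports Defs begin

definition gsub :: "('i \<Rightarrow> 'v::ab_group_add set) \<Rightarrow> bool" where
 "gsub G \<longleftrightarrow> (\<forall>i. 0 \<in> G i \<and> (\<forall>x\<in>G i. \<forall>y\<in>G i. x + y \<in> G i) \<and> (\<forall>x\<in>G i. -x \<in> G i))"

lemma gcomp_prop:
  assumes "graded_decomp G"
  shows "finite {i. gcomp G v i \<noteq> 0} \<and> (\<forall>i. gcomp G v i \<in> G i) \<and> v = sum (gcomp G v) {i. gcomp G v i \<noteq> 0}"
proof -
  from assms have "\<exists>!f. finite {i. f i \<noteq> 0} \<and> (\<forall>i. f i \<in> G i) \<and> v = sum f {i. f i \<noteq> 0}"
    unfolding graded_decomp_def by blast
  then show ?thesis unfolding gcomp_def by (rule theI')
qed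

lemma gcomp_in: "graded_decomp G \<Longrightarrow> gcomp G v i \<in> G i"
  using gcomp_prop by blast

lemma gcomp_fin: "graded_decomp G \<Longrightarrow> finite {i. gcomp G v i \<noteq> 0}"
  using gcomp_prop by blast

lemma gcomp_sum_sup:
  assumes "graded_decomp G" "finite S" "{i. gcomp G v i \<noteq> 0} \<subseteq> S"
  shows "v = sum (gcomp G v) S"
proof -
  have "v = sum (gcomp G v) {i. gcomp G v i \<noteq> 0}" using gcomp_prop[OF assms(1)] by blast
  also have "\<dots> = sum (gcomp G v) S"
    by (rule sum.mono_neutral_left[OF assms(2,3)]) auto
  finally show ?thesis .
qed

lemma gcomp_char:
  assumes "graded_decomp G" "finite S" "\<And>i. i \<notin> S \<Longrightarrow> f i = 0" "\<And>i. f i \<in> G i" "v = sum f S"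
  shows "gcomp G v = f"
proof -
  have sub: "{i. f i \<noteq> 0} \<subseteq> S" using assms(3) by blast
  have fin: "finite {i. f i \<noteq> 0}" using finite_subset[OF sub assms(2)] .
  have "sum f S = sum f {i. f i \<noteq> 0}" by (rule sum.mono_neutral_right[OF assms(2) sub]) auto
  hence P: "finite {i. f i \<noteq> 0} \<and> (\<forall>i. f i \<in> G i) \<and> v = sum f {i. f i \<noteq> 0}" using fin assms(4,5) by auto
  from assms(1) have ex: "\<exists>!f. finite {i. f i \<noteq> 0} \<and> (\<forall>i. f i \<in> G i) \<and> v = sum f {i. f i \<noteq> 0}"
    unfolding graded_decomp_def by blast
  show ?thesis unfolding gcomp_def by (rule the1_equality[OF ex]) (rule P)
qed

lemma gcomp_add:
  assumes "graded_decomp G" "gsub G"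
  shows "gcomp G (u + v) = (\<lambda>i. gcomp G u i + gcomp G v i)"
proof (rule gcomp_char[OF assms(1), where S = "{i. gcomp G u i \<noteq> 0} \<union> {i. gcomp G v i \<noteq> 0}"])
  let ?S = "{i. gcomp G u i \<noteq> 0} \<union> {i. gcomp G v i \<noteq> 0}"
  show "finite ?S" using gcomp_fin[OF assms(1)] by auto
  show "\<And>i. i \<notin> ?S \<Longrightarrow> gcomp G u i + gcomp G v i = 0" by auto
  show "\<And>i. gcomp G u i + gcomp G v i \<in> G i" using gcomp_in[OF assms(1)] assms(2) unfolding gsub_def by blast
  have "u = sum (gcomp G u) ?S" by (rule gcomp_sum_sup[OF assms(1)]) (use gcomp_fin[OF assms(1)] in auto)
  moreover have "v = sum (gcomp G v) ?S" by (rule gcomp_sum_sup[OF assms(1)]) (use gcomp_fin[OF assms(1)] in auto)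
  ultimately show "u + v = (\<Sum>i\<in>?S. gcomp G u i + gcomp G v i)" by (simp add: sum.distrib)
qed

lemma gcomp_zero:
  assumes "graded_decomp G" "gsub G"
  shows "gcomp G 0 = (\<lambda>i. 0)"
  by (rule gcomp_char[OF assms(1), where S = "{}"]) (use assms(2) in \<open>auto simp: gsub_def\<close>)

lemma gcomp_neg:
  assumes "graded_decomp G" "gsub G"
  shows "gcomp G (- u) = (\<lambda>i. - gcomp G u i)"
proof (rule gcomp_char[OF assms(1), where S = "{i. gcomp G u i \<noteq> 0}"])
  show "finite {i. gcomp G u i \<noteq> 0}" using gcomp_fin[OF assms(1)] by auto
  show "\<And>i. i \<notin> {i. gcomp G u i \<noteq> 0} \<Longrightarrow> - gcomp G u i = 0" by auto
  show "\<And>i. - gcomp G u i \<in> G i" using gcomp_in[OF assms(1)] assms(2) unfolding gsub_def by blast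
  have "u = sum (gcomp G u) {i. gcomp G u i \<noteq> 0}" using gcomp_prop[OF assms(1)] by blast
  then show "- u = (\<Sum>i\<in>{i. gcomp G u i \<noteq> 0}. - gcomp G u i)" by (metis sum_negf)
qed

lemma gcomp_diff:
  assumes "graded_decomp G" "gsub G"
  shows "gcomp G (u - v) i = gcomp G u i - gcomp G v i"
  using gcomp_add[OF assms, of u "- v"] gcomp_neg[OF assms, of v] by simp

lemma gcomp_sum:
  assumes "graded_decomp G" "gsub G"
  shows "gcomp G (sum h I) i = (\<Sum>k\<in>I. gcomp G (h k) i)"
proof (induction I rule: infinite_finite_induct)
  case (infinite A) then show ?case using gcomp_zero[OF assms] by simp
next
  case empty then show ?case using gcomp_zero[OF assms] by simp
next
  case (insert x F) then show ?case using gcomp_add[OF assms] by simp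
qed

lemma gcomp_sum_list:
  assumes "graded_decomp G" "gsub G"
  shows "gcomp G (sum_list (map h xs)) i = sum_list (map (\<lambda>k. gcomp G (h k) i) xs)"
proof (induction xs)
  case Nil then show ?case using gcomp_zero[OF assms] by simp
next
  case (Cons a xs) then show ?case using gcomp_add[OF assms] by simp
qed

lemma gcomp_hom:
  assumes "graded_decomp G" "gsub G" "v \<in> G c"
  shows "gcomp G v = (\<lambda>i. if i = c then v else 0)"
  by (rule gcomp_char[OF assms(1), where S = "{c}"]) (use assms(2,3) in \<open>auto simp: gsub_def\<close>)

lemma G_disj:
  assumes "graded_decomp G" "gsub G" "v \<in> G c" "v \<in> G d" "v \<noteq> 0"
  shows "c = d"
proof -
  have "(\<lambda>i. if i = c then v else 0) = (\<lambda>i. if i = d then v else 0)"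
    using gcomp_hom[OF assms(1,2,3)] gcomp_hom[OF assms(1,2,4)] by simp
  then have "(if c = c then v else 0) = (if c = d then v else 0)" by (rule fun_cong)
  then show ?thesis using assms(5) by (auto split: if_splits)
qed


locale mt4 =
  fixes alg :: "'k::field \<Rightarrow> 'r::comm_ring_1"
    and gradR :: "'a::{cancel_comm_monoid_add, wellorder} \<Rightarrow> 'r set"
    and act :: "'a \<Rightarrow> 'b::wellorder \<Rightarrow> 'b"
    and rmul :: "'r \<Rightarrow> 'n::ab_group_add \<Rightarrow> 'n"
    and gradN :: "'b \<Rightarrow> 'n set"
    and M X :: "'n set"
    and compl :: "'b \<Rightarrow> 'n set \<Rightarrow> 'n set"
  assumes ss: "standing_setup alg gradR act rmul gradN M"
    and gc: "graded_complementation alg rmul gradN compl"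
    and mb: "macaulay_basis rmul gradN M X"
begin

lemma modN: "module rmul" using ss unfolding standing_setup_def by auto
lemma alg1: "alg 1 = 1" using ss unfolding standing_setup_def by auto
lemma alg_add: "alg (c + d) = alg c + alg d" using ss unfolding standing_setup_def by auto
lemma alg_mult: "alg (c * d) = alg c * alg d" using ss unfolding standing_setup_def by auto

lemma kmod: "module (kscale alg rmul)"
proof
  fix a b :: 'k and x y :: 'n
  show "kscale alg rmul a (x + y) = kscale alg rmul a x + kscale alg rmul a y"
    unfolding kscale_def by (rule module.scale_right_distrib[OF modN])
  show "kscale alg rmul (a + b) x = kscale alg rmul a x + kscale alg rmul b x"
    unfolding kscale_def alg_add by (rule module.scale_left_distrib[OF modN])
  show "kscale alg rmul a (kscale alg rmul b x) = kscale alg rmul (a * b) x"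
    unfolding kscale_def alg_mult by (rule module.scale_scale[OF modN])
  show "kscale alg rmul 1 x = x"
    unfolding kscale_def alg1 by (rule module.scale_one[OF modN])
qed

lemma Rmod: "module (\<lambda>c (r::'r). alg c * r)"
proof
  fix a b :: 'k and x y :: 'r
  show "alg a * (x + y) = alg a * x + alg a * y" by (simp add: algebra_simps)
  show "alg (a + b) * x = alg a * x + alg b * x" by (simp add: alg_add algebra_simps)
  show "alg a * (alg b * x) = alg (a * b) * x" by (simp add: alg_mult)
  show "alg 1 * x = x" by (simp add: alg1)
qed

lemma gradN_sub: "module.subspace (kscale alg rmul) (gradN b)"
  using ss unfolding standing_setup_def by auto

lemma gradR_sub: "module.subspace (\<lambda>c r. alg c * r) (gradR a)"
  using ss unfolding standing_setup_def by auto

lemma gradR_scale: "r \<in> gradR a \<Longrightarrow> alg c * r \<in> gradR a"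
  using module.subspace_scale[OF Rmod gradR_sub] by blast

lemma gsubN: "gsub gradN"
  unfolding gsub_def using module.subspace_0[OF kmod gradN_sub] module.subspace_add[OF kmod gradN_sub]
    module.subspace_neg[OF kmod gradN_sub] by blast

lemma gdN: "graded_decomp gradN" using ss unfolding standing_setup_def by auto
lemma gdR: "graded_decomp gradR" using ss unfolding standing_setup_def by auto

lemma mulN: "r \<in> gradR a \<Longrightarrow> n \<in> gradN b \<Longrightarrow> rmul r n \<in> gradN (act a b)"
  using ss unfolding standing_setup_def by auto

lemma act_mono: "b \<le> b' \<Longrightarrow> act a b \<le> act a b'"
  using ss unfolding standing_setup_def by auto

lemma act_inj: "act a b = act a b' \<Longrightarrow> b = b'"
  using ss unfolding standing_setup_def by auto

lemma Msub: "module.subspace rmul M"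
  using ss unfolding standing_setup_def by auto

lemma Xfin: "finite X" and XM: "X \<subseteq> M" and X0: "0 \<notin> X"
  and macspan: "module.span rmul {glf gradN p | p. p \<in> M \<and> p \<noteq> 0} = module.span rmul (glf gradN ` X)"
  using mb unfolding macaulay_basis_def by blast+

abbreviation "W b \<equiv> Wspace alg gradR rmul gradN X b"
abbreviation "C b \<equiv> compl b (W b)"
abbreviation "bad m b \<equiv> gcomp gradN m b \<notin> C b"
abbreviation "step \<equiv> red_step alg gradR rmul gradN compl X"

lemma W_props: "module.subspace (kscale alg rmul) (W b) \<and> W b \<subseteq> gradN b"
proof
  show "module.subspace (kscale alg rmul) (W b)"
    unfolding Wspace_def by (rule module.subspace_span[OF kmod])
  show "W b \<subseteq> gradN b"
    unfolding Wspace_def by (rule module.span_minimal[OF kmod _ gradN_sub]) blast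
qed

lemma C_props: "module.subspace (kscale alg rmul) (C b) \<and> C b \<subseteq> gradN b \<and>
        W b \<inter> C b = {0} \<and> {w + w' | w w'. w \<in> W b \<and> w' \<in> C b} = gradN b"
  using gc W_props unfolding graded_complementation_def by blast

lemma C0: "0 \<in> C b" using module.subspace_0[OF kmod] C_props by blast
lemma C_diff: "x \<in> C b \<Longrightarrow> y \<in> C b \<Longrightarrow> x - y \<in> C b"
  using module.subspace_diff[OF kmod] C_props by blast

lemma bad_fin: "finite {b. bad m b}"
proof -
  have "{b. bad m b} \<subseteq> {i. gcomp gradN m i \<noteq> 0}" using C0 by force
  then show ?thesis using gcomp_fin[OF gdN] finite_subset by blast
qed

lemma glf_in: "glf gradN x \<in> gradN (gdeg gradN x)"
  unfolding glf_def using gcomp_in[OF gdN] .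

lemma glf_nz: "x \<noteq> 0 \<Longrightarrow> glf gradN x \<noteq> 0"
proof -
  assume x: "x \<noteq> 0"
  have ne: "{i. gcomp gradN x i \<noteq> 0} \<noteq> {}"
  proof
    assume "{i. gcomp gradN x i \<noteq> 0} = {}"
    then have "x = sum (gcomp gradN x) {}" using gcomp_prop[OF gdN, of x] by simp
    with x show False by simp
  qed
  have "gdeg gradN x \<in> {i. gcomp gradN x i \<noteq> 0}"
    unfolding gdeg_def by (rule Max_in[OF gcomp_fin[OF gdN] ne])
  then show ?thesis unfolding glf_def by simp
qed

end

context mt4 begin

lemma K:
  assumes r: "r \<in> gradR a" and nz: "rmul r (glf gradN x) \<noteq> 0"
    and inb: "rmul r (glf gradN x) \<in> gradN b"
  shows "gcomp gradN (rmul r x) b = rmul r (glf gradN x) \<and> (\<forall>b'. b < b' \<longrightarrow> gcomp gradN (rmul r x) b' = 0)"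
proof -
  let ?S = "{i. gcomp gradN x i \<noteq> 0}"
  let ?D = "gdeg gradN x"
  have fin: "finite ?S" by (rule gcomp_fin[OF gdN])
  have xs: "x = sum (gcomp gradN x) ?S" using gcomp_prop[OF gdN] by blast
  have rx: "rmul r x = (\<Sum>d\<in>?S. rmul r (gcomp gradN x d))"
    by (subst xs) (rule module.scale_sum_right[OF modN])
  have inD: "rmul r (glf gradN x) \<in> gradN (act a ?D)" by (rule mulN[OF r glf_in])
  have bD: "act a ?D = b" by (rule G_disj[OF gdN gsubN inD inb nz])
  have comp: "gcomp gradN (rmul r x) c = (\<Sum>d\<in>?S. if act a d = c then rmul r (gcomp gradN x d) else 0)" for c
    unfolding rx gcomp_sum[OF gdN gsubN]
    by (rule sum.cong[OF refl]) (simp add: gcomp_hom[OF gdN gsubN mulN[OF r gcomp_in[OF gdN]]])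
  have le: "d \<in> ?S \<Longrightarrow> d \<le> ?D" for d unfolding gdeg_def using Max_ge[OF fin] by blast
  have "glf gradN x \<noteq> 0" using nz module.scale_zero_right[OF modN] by metis
  then have DS: "?D \<in> ?S" unfolding glf_def by simp
  have actle: "d \<in> ?S \<Longrightarrow> act a d \<le> b" for d using act_mono[OF le] bD by blast
  have acteq: "d \<in> ?S \<Longrightarrow> act a d = b \<longleftrightarrow> d = ?D" for d using act_inj bD by metis
  have "gcomp gradN (rmul r x) b = (\<Sum>d\<in>?S. if d = ?D then rmul r (gcomp gradN x d) else 0)"
    unfolding comp by (rule sum.cong[OF refl]) (simp add: acteq)
  also have "\<dots> = rmul r (glf gradN x)" using fin DS unfolding glf_def by simp
  finally have 1: "gcomp gradN (rmul r x) b = rmul r (glf gradN x)" .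
  have 2: "gcomp gradN (rmul r x) b' = 0" if "b < b'" for b'
  proof -
    have "gcomp gradN (rmul r x) b' = (\<Sum>d\<in>?S. 0)"
      unfolding comp by (rule sum.cong[OF refl]) (use actle that in fastforce)
    then show ?thesis by simp
  qed
  show ?thesis using 1 2 by blast
qed

lemma step_exists:
  assumes bad0: "bad m b0" and maxb: "\<forall>b'. bad m b' \<longrightarrow> b' \<le> b0"
  shows "\<exists>m'. step m m' \<and> (\<forall>b'. bad m' b' \<longrightarrow> b' < b0)"
proof -
  have "gcomp gradN m b0 \<in> gradN b0" by (rule gcomp_in[OF gdN])
  then obtain w w' where ww: "gcomp gradN m b0 = w + w'" "w \<in> W b0" "w' \<in> C b0"
    using C_props[of b0] by blast
  let ?Gen = "{rmul r (glf gradN x) | x r. x \<in> X \<and> homogeneous gradR r \<and> rmul r (glf gradN x) \<in> gradN b0}"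
  from ww(2) obtain T u where Tu: "finite T" "T \<subseteq> ?Gen" "w = (\<Sum>g\<in>T. kscale alg rmul (u g) g)"
    unfolding Wspace_def module.span_explicit[OF kmod] by blast
  have "\<forall>g\<in>T. \<exists>x r. x \<in> X \<and> homogeneous gradR r \<and> g = rmul r (glf gradN x)" using Tu(2) by blast
  then obtain xg rg where g: "\<And>g. g \<in> T \<Longrightarrow> xg g \<in> X \<and> homogeneous gradR (rg g) \<and> g = rmul (rg g) (glf gradN (xg g))"
    by metis
  have gN: "g \<in> gradN b0" if "g \<in> T" for g using Tu(2) that by blast
  obtain l where l: "set l = T" "distinct l" using finite_distinct_list[OF Tu(1)] by blast
  define rs0 where "rs0 = map (\<lambda>g. (alg (u g) * rg g, xg g)) l"
  define rs where "rs = filter (\<lambda>(r,x). rmul r (glf gradN x) \<noteq> 0) rs0"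
  have prod_eq: "rmul (alg (u g) * rg g) (glf gradN (xg g)) = kscale alg rmul (u g) g" if "g \<in> T" for g
    using g[OF that] unfolding kscale_def by (metis module.scale_scale[OF modN])
  have sumlf: "(\<Sum>(r,x)\<leftarrow>rs. rmul r (glf gradN x)) = w"
  proof -
    have "(\<Sum>(r,x)\<leftarrow>rs. rmul r (glf gradN x)) = (\<Sum>(r,x)\<leftarrow>rs0. rmul r (glf gradN x))"
      unfolding rs_def by (rule sum_list_map_filter) auto
    also have "\<dots> = (\<Sum>g\<leftarrow>l. kscale alg rmul (u g) g)"
      unfolding rs0_def map_map o_def
      by (rule arg_cong[where f=sum_list], rule map_cong[OF refl]) (use prod_eq l(1) in auto)
    also have "\<dots> = (\<Sum>g\<in>T. kscale alg rmul (u g) g)"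
      using sum_list_distinct_conv_sum_set[OF l(2)] l(1) by simp
    finally show ?thesis using Tu(3) by simp
  qed
  have rsprop: "x \<in> X \<and> (\<exists>a. r \<in> gradR a) \<and> rmul r (glf gradN x) \<in> gradN b0 \<and> rmul r (glf gradN x) \<noteq> 0"
    if "(r, x) \<in> set rs" for r x
  proof -
    from that obtain g where gT: "g \<in> T" and rx: "r = alg (u g) * rg g" "x = xg g"
        and nz: "rmul r (glf gradN x) \<noteq> 0"
      unfolding rs_def rs0_def using l(1) by auto
    from g[OF gT] obtain a where "rg g \<in> gradR a" unfolding homogeneous_def by blast
    then have "r \<in> gradR a" using rx gradR_scale by simp
    moreover have "rmul r (glf gradN x) \<in> gradN b0"
      using rx prod_eq[OF gT] module.subspace_scale[OF kmod gradN_sub gN[OF gT]] by simp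
    ultimately show ?thesis using g[OF gT] rx nz by blast
  qed
  define m' where "m' = m - (\<Sum>(r,x)\<leftarrow>rs. rmul r x)"
  have st: "step m m'"
    unfolding red_step_def
  proof (intro exI conjI)
    show "bad m b0" by (rule bad0)
    show "\<forall>b'. bad m b' \<longrightarrow> b' \<le> b0" by (rule maxb)
    show "\<forall>(r, x)\<in>set rs. x \<in> X \<and> homogeneous gradR r \<and> rmul r (glf gradN x) \<in> gradN b0"
      using rsprop unfolding homogeneous_def by blast
    show "m' = m - (\<Sum>(r,x)\<leftarrow>rs. rmul r x)" by (rule m'_def)
    show "gcomp gradN m b0 - (\<Sum>(r,x)\<leftarrow>rs. rmul r (glf gradN x)) \<in> C b0"
      using sumlf ww by simp
  qed
  have cm': "gcomp gradN m' c = gcomp gradN m c - (\<Sum>(r,x)\<leftarrow>rs. gcomp gradN (rmul r x) c)" for c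
    unfolding m'_def gcomp_diff[OF gdN gsubN]
    using gcomp_sum_list[OF gdN gsubN, of "\<lambda>(r,x). rmul r x" rs c]
    by (simp add: case_prod_unfold)
  have good: "\<not> bad m' b'" if "b0 \<le> b'" for b'
  proof (cases "b0 = b'")
    case True
    have "(\<Sum>(r,x)\<leftarrow>rs. gcomp gradN (rmul r x) b0) = (\<Sum>(r,x)\<leftarrow>rs. rmul r (glf gradN x))"
      by (rule arg_cong[where f=sum_list], rule map_cong[OF refl]) (use rsprop K in fastforce)
    then have "gcomp gradN m' b0 = w'" using cm' sumlf ww(1) by simp
    then show ?thesis using ww(3) True by simp
  next
    case False
    then have lt: "b0 < b'" using that by simp
    have "(\<Sum>(r,x)\<leftarrow>rs. gcomp gradN (rmul r x) b') = (\<Sum>(r,x)\<leftarrow>rs. 0)"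
      by (rule arg_cong[where f=sum_list], rule map_cong[OF refl]) (use rsprop K lt in fastforce)
    then have "gcomp gradN m' b' = gcomp gradN m b'" using cm' by (simp add: case_prod_unfold)
    moreover have "\<not> bad m b'" using maxb lt by force
    ultimately show ?thesis by simp
  qed
  have "\<forall>b'. bad m' b' \<longrightarrow> b' < b0" using good not_le by blast
  then show ?thesis using st by blast
qed

end

context mt4 begin

lemma exist_aux: "\<forall>m. (\<forall>b'. bad m b' \<longrightarrow> b' < b) \<longrightarrow> (\<exists>m'. step\<^sup>*\<^sup>* m m' \<and> reduced alg gradR rmul gradN compl X m')"
proof (induction b rule: less_induct)
  case (less b)
  show ?case
  proof (intro allI impI)
    fix m assume H: "\<forall>b'. bad m b' \<longrightarrow> b' < b"
    show "\<exists>m'. step\<^sup>*\<^sup>* m m' \<and> reduced alg gradR rmul gradN compl X m'"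
    proof (cases "\<exists>b'. bad m b'")
      case False
      then have "reduced alg gradR rmul gradN compl X m" unfolding reduced_def red_step_def by blast
      then show ?thesis by blast
    next
      case True
      let ?B = "{b'. bad m b'}"
      have ne: "?B \<noteq> {}" using True by blast
      define b0 where "b0 = Max ?B"
      have b0in: "bad m b0" using Max_in[OF bad_fin ne] b0_def by blast
      have maxb: "\<forall>b'. bad m b' \<longrightarrow> b' \<le> b0" using Max_ge[OF bad_fin] b0_def by blast
      obtain m' where st: "step m m'" and m'b: "\<forall>b'. bad m' b' \<longrightarrow> b' < b0"
        using step_exists[OF b0in maxb] by blast
      have "b0 < b" using H b0in by blast
      then obtain m'' where "step\<^sup>*\<^sup>* m' m''" "reduced alg gradR rmul gradN compl X m''"
        using less.IH m'b by blast
      then show ?thesis using st by (meson converse_rtranclp_into_rtranclp)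
    qed
  qed
qed

lemma exist: "\<exists>m'. step\<^sup>*\<^sup>* m m' \<and> reduced alg gradR rmul gradN compl X m'"
proof (cases "\<exists>b'. bad m b'")
  case False
  then have "reduced alg gradR rmul gradN compl X m" unfolding reduced_def red_step_def by blast
  then show ?thesis by blast
next
  case True
  let ?B = "{b'. bad m b'}"
  have ne: "?B \<noteq> {}" using True by blast
  define b0 where "b0 = Max ?B"
  have b0in: "bad m b0" using Max_in[OF bad_fin ne] b0_def by blast
  have maxb: "\<forall>b'. bad m b' \<longrightarrow> b' \<le> b0" using Max_ge[OF bad_fin] b0_def by blast
  obtain m' where st: "step m m'" and m'b: "\<forall>b'. bad m' b' \<longrightarrow> b' < b0"
    using step_exists[OF b0in maxb] by blast
  then obtain m'' where "step\<^sup>*\<^sup>* m' m''" "reduced alg gradR rmul gradN compl X m''"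
    using exist_aux by blast
  then show ?thesis using st by (meson converse_rtranclp_into_rtranclp)
qed

lemma reduced_good: "reduced alg gradR rmul gradN compl X m \<Longrightarrow> \<not> bad m b"
proof
  assume red: "reduced alg gradR rmul gradN compl X m" and bb: "bad m b"
  let ?B = "{b'. bad m b'}"
  have ne: "?B \<noteq> {}" using bb by blast
  define b0 where "b0 = Max ?B"
  have b0in: "bad m b0" using Max_in[OF bad_fin ne] b0_def by blast
  have maxb: "\<forall>b'. bad m b' \<longrightarrow> b' \<le> b0" using Max_ge[OF bad_fin] b0_def by blast
  show False using step_exists[OF b0in maxb] red unfolding reduced_def by blast
qed

lemma sum_list_M: "(\<And>y. y \<in> set ys \<Longrightarrow> f y \<in> M) \<Longrightarrow> sum_list (map f ys) \<in> M"
  by (induction ys) (auto intro: module.subspace_0[OF modN Msub] module.subspace_add[OF modN Msub])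

lemma step_M: "step m m' \<Longrightarrow> m - m' \<in> M"
proof -
  assume "step m m'"
  then obtain b rs where rs: "\<forall>(r, x)\<in>set rs. x \<in> X" and m': "m' = m - (\<Sum>(r,x)\<leftarrow>rs. rmul r x)"
    unfolding red_step_def by blast
  have "(\<Sum>(r,x)\<leftarrow>rs. rmul r x) \<in> M"
    by (rule sum_list_M) (use rs XM module.subspace_scale[OF modN Msub] in auto)
  then show ?thesis using m' by simp
qed

lemma star_M: "step\<^sup>*\<^sup>* m m' \<Longrightarrow> m - m' \<in> M"
proof (induction rule: rtranclp_induct)
  case base then show ?case using module.subspace_0[OF modN Msub] by simp
next
  case (step y z)
  have "m - z = (m - y) + (y - z)" by simp
  then show ?case using step step_M module.subspace_add[OF modN Msub] by metis
qed

lemma uniq: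
  assumes pM: "p \<in> M" and good: "\<forall>b. gcomp gradN p b \<in> C b"
  shows "p = 0"
proof (rule ccontr)
  assume pnz: "p \<noteq> 0"
  let ?B = "gdeg gradN p"
  let ?l = "glf gradN p"
  have lin: "?l \<in> gradN ?B" by (rule glf_in)
  have lnz: "?l \<noteq> 0" by (rule glf_nz[OF pnz])
  have lC: "?l \<in> C ?B" using good unfolding glf_def by blast
  have "?l \<in> module.span rmul {glf gradN q | q. q \<in> M \<and> q \<noteq> 0}"
    by (rule module.span_base[OF modN]) (use pM pnz in blast)
  then have "?l \<in> module.span rmul (glf gradN ` X)" using macspan by simp
  then obtain u where lu: "?l = (\<Sum>y\<in>glf gradN ` X. rmul (u y) y)"
    using module.span_finite[OF modN finite_imageI[OF Xfin]] by auto
  have "\<forall>y\<in>glf gradN ` X. \<exists>x\<in>X. y = glf gradN x" by blast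
  then obtain xy where xy: "\<And>y. y \<in> glf gradN ` X \<Longrightarrow> xy y \<in> X \<and> y = glf gradN (xy y)" by metis
  let ?S = "\<lambda>y. {a. gcomp gradR (u y) a \<noteq> 0}"
  have ru: "rmul (u y) y = (\<Sum>a\<in>?S y. rmul (gcomp gradR (u y) a) y)" for y
  proof -
    have "u y = sum (gcomp gradR (u y)) (?S y)" using gcomp_prop[OF gdR] by blast
    then have "rmul (u y) y = rmul (sum (gcomp gradR (u y)) (?S y)) y" by simp
    also have "\<dots> = (\<Sum>a\<in>?S y. rmul (gcomp gradR (u y) a) y)" by (rule module.scale_sum_left[OF modN])
    finally show ?thesis .
  qed
  have e1: "gcomp gradN ?l ?B = ?l" using gcomp_hom[OF gdN gsubN lin] by simp
  have e2: "?l = (\<Sum>y\<in>glf gradN ` X. \<Sum>a\<in>?S y. rmul (gcomp gradR (u y) a) y)"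
    using lu ru by simp
  have "?l = gcomp gradN ?l ?B" using e1 by simp
  also have "\<dots> = gcomp gradN (\<Sum>y\<in>glf gradN ` X. \<Sum>a\<in>?S y. rmul (gcomp gradR (u y) a) y) ?B"
    by (rule arg_cong[where f="\<lambda>v. gcomp gradN v ?B", OF e2])
  also have "\<dots> = (\<Sum>y\<in>glf gradN ` X. \<Sum>a\<in>?S y. gcomp gradN (rmul (gcomp gradR (u y) a) y) ?B)"
    by (simp add: gcomp_sum[OF gdN gsubN])
  finally have eq: "?l = (\<Sum>y\<in>glf gradN ` X. \<Sum>a\<in>?S y. gcomp gradN (rmul (gcomp gradR (u y) a) y) ?B)" .
  have tm: "gcomp gradN (rmul (gcomp gradR (u y) a) y) ?B \<in> W ?B" if y: "y \<in> glf gradN ` X" for y a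
  proof -
    let ?r = "gcomp gradR (u y) a"
    have rR: "?r \<in> gradR a" by (rule gcomp_in[OF gdR])
    have yx: "y = glf gradN (xy y)" and xX: "xy y \<in> X" using xy[OF y] by auto
    have hin: "rmul ?r y \<in> gradN (act a (gdeg gradN (xy y)))"
      using mulN[OF rR glf_in, of "xy y"] yx by simp
    show ?thesis
    proof (cases "act a (gdeg gradN (xy y)) = ?B")
      case True
      then have "gcomp gradN (rmul ?r y) ?B = rmul ?r (glf gradN (xy y))"
        using gcomp_hom[OF gdN gsubN hin] yx by simp
      moreover have "rmul ?r (glf gradN (xy y)) \<in> W ?B"
      proof -
        have gen: "rmul ?r (glf gradN (xy y)) \<in> gradN ?B" using hin True yx by simp
        show ?thesis unfolding Wspace_def
          by (rule module.span_base[OF kmod]) (use xX rR gen in \<open>unfold homogeneous_def, blast\<close>)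
      qed
      ultimately show ?thesis by simp
    next
      case False
      then have "gcomp gradN (rmul ?r y) ?B = 0"
        using gcomp_hom[OF gdN gsubN hin] by simp
      then show ?thesis using module.subspace_0[OF kmod] W_props by simp
    qed
  qed
  have "?l \<in> W ?B"
    unfolding eq
    by (intro module.subspace_sum[OF kmod] W_props[THEN conjunct1] tm) 
  then have "?l \<in> W ?B \<inter> C ?B" using lC by blast
  then show False using C_props lnz by blast
qed

end

theorem mainTheorem4:
  fixes alg :: "'k::field \<Rightarrow> 'r::comm_ring_1"
    and gradR :: "'a::{cancel_comm_monoid_add, wellorder} \<Rightarrow> 'r set"
    and act :: "'a \<Rightarrow> 'b::wellorder \<Rightarrow> 'b"
    and rmul :: "'r \<Rightarrow> 'n::ab_group_add \<Rightarrow> 'n"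
    and gradN :: "'b \<Rightarrow> 'n set"
    and M X :: "'n set"
    and compl :: "'b \<Rightarrow> 'n set \<Rightarrow> 'n set"
  assumes "standing_setup alg gradR act rmul gradN M"
    and "graded_complementation alg rmul gradN compl"
    and "macaulay_basis rmul gradN M X"
  shows "(\<forall>m. \<exists>!m'. (red_step alg gradR rmul gradN compl X)\<^sup>*\<^sup>* m m' \<and>
                   reduced alg gradR rmul gradN compl X m') \<and>
         (\<forall>m m'. (red_step alg gradR rmul gradN compl X)\<^sup>*\<^sup>* m m' \<and>
                   reduced alg gradR rmul gradN compl X m' \<longrightarrow>
              (\<forall>b. gcomp gradN m' b \<in> compl_diff compl b (gradN b) (Wspace alg gradR rmul gradN X b)))"
proof -
  interpret mt4 alg gradR act rmul gradN M X compl using assms by unfold_locales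
  have A: "\<forall>m. \<exists>!m'. (red_step alg gradR rmul gradN compl X)\<^sup>*\<^sup>* m m' \<and>
                   reduced alg gradR rmul gradN compl X m'"
  proof
    fix m
    obtain m1 where m1: "step\<^sup>*\<^sup>* m m1" "reduced alg gradR rmul gradN compl X m1" using exist by blast
    show "\<exists>!m'. step\<^sup>*\<^sup>* m m' \<and> reduced alg gradR rmul gradN compl X m'"
    proof (rule ex1I[of _ m1])
      show "step\<^sup>*\<^sup>* m m1 \<and> reduced alg gradR rmul gradN compl X m1" using m1 by blast
      fix m2 assume m2: "step\<^sup>*\<^sup>* m m2 \<and> reduced alg gradR rmul gradN compl X m2"
      have "(m - m1) - (m - m2) \<in> M"
        using module.subspace_diff[OF modN Msub] star_M m1(1) m2 by blast
      then have pM: "m2 - m1 \<in> M" by simp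
      have "\<forall>b. gcomp gradN (m2 - m1) b \<in> C b"
        using reduced_good m1(2) m2 C_diff unfolding gcomp_diff[OF gdN gsubN] by blast
      then have "m2 - m1 = 0" using uniq pM by blast
      then show "m2 = m1" by simp
    qed
  qed
  have B: "\<forall>m m'. (red_step alg gradR rmul gradN compl X)\<^sup>*\<^sup>* m m' \<and>
                   reduced alg gradR rmul gradN compl X m' \<longrightarrow>
              (\<forall>b. gcomp gradN m' b \<in> compl_diff compl b (gradN b) (Wspace alg gradR rmul gradN X b))"
    using reduced_good gcomp_in[OF gdN] unfolding compl_diff_def by blast
  show ?thesis using A B by blast
qed

end
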